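(* The dimension of $\sigma_r(\mathcal{M}_{n,d})$ is bounded above by the optimal value of the following integer linear program in the variables $c_1,\ldots,c_d\in\mathbb{Z}$: $$\text{maximize } c_1+c_2+\cdots+c_d-1$$ subject to $$0\le c_i\le nr\ \text{ for } i\in[d],\qquad \sum_{i\in S}c_i\le\sum_{\lambda\cap S\neq\emptyset}|N_\lambda|\ \text{ for all } S\subseteq[d].$$ Here the last sum ranges over the partitions $\lambda$ of $d$ of length at most $n$ having at least one part lying in $S$.
   Context: Work over $\mathbb{C}$. Let $[d]=\{1,\ldots,d\}$. The variety $\sigma_r(\mathcal{M}_{n,d})\subset\mathbb{P}^{\binom{n+d-1}{d}-1}$ is the Zariski closure of the image of $m_{i_1\cdots i_n}=\sum_{j=1}^r\mu^{(j)}_{1i_1}\cdots\mu^{(j)}_{ni_n}$ over all $(i_1,\ldots,i_n)\in\mathbb{Z}_{\ge0}^n$ with $\sum_k i_k=d$, with $\mu^{(j)}_{k0}=1$. For a partition $\lambda$ of $d$ with at most $n$ parts, $N_\lambda$ is the set of index vectors $(i_1,\ldots,i_n)\in\mathbb{Z}_{\ge 0}^n$ whose multiset of nonzero entries equals $\lambda$. *)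

theory Defs
  imports Complex_Main "HOL-Library.Multiset" "HOL-Library.Extended_Nat"
begin

text \<open>Points of the affine space \<open>\<complex>^I\<close> (I finite) are functions vanishing outside I.\<close>
definition aff_space :: "'a set \<Rightarrow> ('a \<Rightarrow> complex) set" where
  "aff_space I = {x. \<forall>v. v \<notin> I \<longrightarrow> x v = 0}"

inductive_set polyfun :: "'a set \<Rightarrow> (('a \<Rightarrow> complex) \<Rightarrow> complex) set" for I where
  pf_const: "(\<lambda>x. c) \<in> polyfun I"
| pf_var: "v \<in> I \<Longrightarrow> (\<lambda>x. x v) \<in> polyfun I"
| pf_add: "f \<in> polyfun I \<Longrightarrow> g \<in> polyfun I \<Longrightarrow> (\<lambda>x. f x + g x) \<in> polyfun I"
| pf_mult: "f \<in> polyfun I \<Longrightarrow> g \<in> polyfun I \<Longrightarrow> (\<lambda>x. f x * g x) \<in> polyfun I"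

definition zclosed :: "'a set \<Rightarrow> ('a \<Rightarrow> complex) set \<Rightarrow> bool" where
  "zclosed I A \<longleftrightarrow> (\<exists>F \<subseteq> polyfun I. A = {x \<in> aff_space I. \<forall>f\<in>F. f x = 0})"

definition zclosure :: "'a set \<Rightarrow> ('a \<Rightarrow> complex) set \<Rightarrow> ('a \<Rightarrow> complex) set" where
  "zclosure I A = \<Inter>{C. zclosed I C \<and> A \<subseteq> C}"

definition zirreducible :: "'a set \<Rightarrow> ('a \<Rightarrow> complex) set \<Rightarrow> bool" where
  "zirreducible I A \<longleftrightarrow> zclosed I A \<and> A \<noteq> {} \<and>
     (\<forall>B C. zclosed I B \<longrightarrow> zclosed I C \<longrightarrow> A \<subseteq> B \<union> C \<longrightarrow> A \<subseteq> B \<or> A \<subseteq> C)"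

definition zdim :: "'a set \<Rightarrow> ('a \<Rightarrow> complex) set \<Rightarrow> enat" where
  "zdim I V = Sup {enat k | k. \<exists>Z :: nat \<Rightarrow> ('a \<Rightarrow> complex) set.
      (\<forall>i\<le>k. zirreducible I (Z i) \<and> Z i \<subseteq> V) \<and> (\<forall>i<k. Z i \<subset> Z (Suc i))}"

definition idx_set :: "nat \<Rightarrow> nat \<Rightarrow> nat list set" where
  "idx_set n d = {i. length i = n \<and> sum_list i = d}"

text \<open>Parametrization: \<open>mu j k i\<close> is \<mu>^{(j)}_{k i} (j \<in> [r], k \<in> [n], i \<in> [d]);
  the convention \<mu>^{(j)}_{k0} = 1 is built in.\<close>
definition mu_val :: "(nat \<Rightarrow> nat \<Rightarrow> nat \<Rightarrow> complex) \<Rightarrow> nat \<Rightarrow> nat \<Rightarrow> nat \<Rightarrow> complex" where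
  "mu_val mu j k i = (if i = 0 then 1 else mu j k i)"

definition sigma_map :: "nat \<Rightarrow> nat \<Rightarrow> nat \<Rightarrow> (nat \<Rightarrow> nat \<Rightarrow> nat \<Rightarrow> complex) \<Rightarrow> nat list \<Rightarrow> complex" where
  "sigma_map n d r mu idx =
     (if idx \<in> idx_set n d
      then (\<Sum>j=1..r. \<Prod>k=1..n. mu_val mu j k (idx ! (k - 1)))
      else 0)"

text \<open>Affine cone over sigma_r(M_{n,d}): Zariski closure of the image of the parametrization
  in the affine space with coordinates indexed by idx_set n d.\<close>
definition sigma_cone :: "nat \<Rightarrow> nat \<Rightarrow> nat \<Rightarrow> (nat list \<Rightarrow> complex) set" where
  "sigma_cone n d r = zclosure (idx_set n d) (range (sigma_map n d r))"

text \<open>Projective dimension of sigma_r(M_{n,d}) = affine dimension of its cone minus 1.\<close>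
definition sigma_dim :: "nat \<Rightarrow> nat \<Rightarrow> nat \<Rightarrow> int" where
  "sigma_dim n d r = int (the_enat (zdim (idx_set n d) (sigma_cone n d r))) - 1"

definition partitions_le :: "nat \<Rightarrow> nat \<Rightarrow> nat multiset set" where
  "partitions_le n d = {lam. (\<forall>p \<in># lam. p > 0) \<and> sum_mset lam = d \<and> size lam \<le> n}"

definition N_lam :: "nat \<Rightarrow> nat \<Rightarrow> nat multiset \<Rightarrow> nat list set" where
  "N_lam n d lam = {i \<in> idx_set n d. mset (filter (\<lambda>x. x \<noteq> 0) i) = lam}"

definition ilp_feasible :: "nat \<Rightarrow> nat \<Rightarrow> nat \<Rightarrow> (nat \<Rightarrow> int) \<Rightarrow> bool" where
  "ilp_feasible n d r c \<longleftrightarrow>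
     (\<forall>i. i \<notin> {1..d} \<longrightarrow> c i = 0) \<and>
     (\<forall>i\<in>{1..d}. 0 \<le> c i \<and> c i \<le> int (n * r)) \<and>
     (\<forall>S \<subseteq> {1..d}. (\<Sum>i\<in>S. c i) \<le>
        (\<Sum>lam \<in> {lam \<in> partitions_le n d. \<exists>p \<in># lam. p \<in> S}. int (card (N_lam n d lam))))"

definition ilp_opt :: "nat \<Rightarrow> nat \<Rightarrow> nat \<Rightarrow> int" where
  "ilp_opt n d r = Max {(\<Sum>i=1..d. c i) - 1 | c. ilp_feasible n d r c}"

end

theory Submission
  imports Defs "HOL-Library.Function_Algebras" "HOL-Library.FuncSet"
begin


inductive_set lspan :: "('a \<Rightarrow> complex) set \<Rightarrow> ('a \<Rightarrow> complex) set" for A where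
  ls_zero: "(\<lambda>x. 0) \<in> lspan A"
| ls_gen: "g \<in> A \<Longrightarrow> (\<lambda>x. c * g x) \<in> lspan A"
| ls_add: "f \<in> lspan A \<Longrightarrow> g \<in> lspan A \<Longrightarrow> (\<lambda>x. f x + g x) \<in> lspan A"

lemma sum_fun_apply: "(\<Sum>v\<in>T. (f v :: 'a \<Rightarrow> 'b::comm_monoid_add)) x = (\<Sum>v\<in>T. f v x)"
  by (induct T rule: infinite_finite_induct) auto

lemma fvs: "vector_space (\<lambda>(c::complex) (f::'a \<Rightarrow> complex). (\<lambda>x. c * f x))"
  by unfold_locales (auto simp: fun_eq_iff algebra_simps)

lemma indep_bound:
  fixes gs :: "nat \<Rightarrow> ('a \<Rightarrow> complex)" and G :: "('a \<Rightarrow> complex) set"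
  assumes G: "finite G" and sp: "\<forall>i<m. gs i \<in> lspan G"
    and ind: "\<forall>a. (\<forall>x. (\<Sum>i<m. a i * gs i x) = 0) \<longrightarrow> (\<forall>i<m. a i = 0)"
  shows "m \<le> card G"
proof -
  interpret V: vector_space "\<lambda>(c::complex) (f::'a \<Rightarrow> complex). (\<lambda>x. c * f x)" by (rule fvs)
  have sub: "lspan G \<subseteq> V.span G"
  proof
    fix f assume "f \<in> lspan G"
    then show "f \<in> V.span G"
    proof induct
      case ls_zero
      then show ?case using V.span_zero by (simp add: zero_fun_def)
    next
      case (ls_gen g c)
      then show ?case using V.span_scale[OF V.span_base[OF ls_gen]] by simp
    next
      case (ls_add f g)
      then show ?case using V.span_add[OF ls_add(2) ls_add(4)] by (simp add: plus_fun_def)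
    qed
  qed
  have inj: "inj_on gs {..<m}"
  proof (rule inj_onI, rule ccontr)
    fix i j assume ij: "i \<in> {..<m}" "j \<in> {..<m}" "gs i = gs j" "i \<noteq> j"
    define a where "a = (\<lambda>k. if k = i then (1::complex) else if k = j then -1 else 0)"
    have "(\<Sum>k<m. a k * gs k x) = 0" for x
    proof -
      have "(\<Sum>k<m. a k * gs k x) = (\<Sum>k\<in>{i,j}. a k * gs k x)"
        by (rule sum.mono_neutral_right) (use ij in \<open>auto simp: a_def\<close>)
      also have "\<dots> = 0" using ij by (simp add: a_def)
      finally show ?thesis .
    qed
    then have "a i = 0" using ind ij by blast
    then show False by (simp add: a_def)
  qed
  have indep: "V.independent (gs ` {..<m})"
  proof
    assume "V.dependent (gs ` {..<m})"
    then obtain T u where T: "finite T" "T \<subseteq> gs ` {..<m}"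
      "(\<Sum>v\<in>T. (\<lambda>x. u v * v x)) = 0" "\<exists>v\<in>T. u v \<noteq> 0"
      unfolding V.dependent_explicit by blast
    define a where "a = (\<lambda>k. if gs k \<in> T then u (gs k) else 0)"
    have "(\<Sum>k<m. a k * gs k x) = 0" for x
    proof -
      have "(\<Sum>k<m. a k * gs k x) = (\<Sum>k\<in>{k\<in>{..<m}. gs k \<in> T}. u (gs k) * gs k x)"
        by (rule sum.mono_neutral_cong_right) (auto simp: a_def)
      also have "\<dots> = (\<Sum>v\<in>gs ` {k\<in>{..<m}. gs k \<in> T}. u v * v x)"
        by (rule sum.reindex[symmetric, unfolded comp_def]) (rule inj_on_subset[OF inj], auto)
      also have "gs ` {k\<in>{..<m}. gs k \<in> T} = T" using T(2) by auto
      also have "(\<Sum>v\<in>T. u v * v x) = (\<Sum>v\<in>T. (\<lambda>x. u v * v x)) x"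
        by (simp add: sum_fun_apply)
      also have "\<dots> = 0" using T(3) by simp
      finally show ?thesis .
    qed
    then have "\<forall>k<m. a k = 0" using ind by blast
    moreover obtain v where "v \<in> T" "u v \<noteq> 0" using T(4) by blast
    moreover then obtain k where "k < m" "v = gs k" using T(2) by auto
    ultimately show False by (auto simp: a_def)
  qed
  have "gs ` {..<m} \<subseteq> V.span G" using sp sub by auto
  from V.independent_span_bound[OF G indep this]
  have "card (gs ` {..<m}) \<le> card G" by simp
  with card_image[OF inj] show ?thesis by simp
qed



inductive polydeg :: "'a set \<Rightarrow> nat \<Rightarrow> (('a \<Rightarrow> complex) \<Rightarrow> complex) \<Rightarrow> bool" for I where
  pd_const: "polydeg I k (\<lambda>x. c)"
| pd_var: "v \<in> I \<Longrightarrow> 1 \<le> k \<Longrightarrow> polydeg I k (\<lambda>x. x v)"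
| pd_add: "polydeg I k f \<Longrightarrow> polydeg I k g \<Longrightarrow> polydeg I k (\<lambda>x. f x + g x)"
| pd_mult: "polydeg I k f \<Longrightarrow> polydeg I l g \<Longrightarrow> polydeg I (k+l) (\<lambda>x. f x * g x)"

lemma pd_mono: "polydeg I k f \<Longrightarrow> k \<le> k' \<Longrightarrow> polydeg I k' f"
proof (induct arbitrary: k' rule: polydeg.induct)
  case (pd_mult k f l g)
  then have "polydeg I (k' - l) f" by auto
  moreover have "polydeg I l g" using pd_mult by auto
  ultimately have "polydeg I ((k' - l) + l) (\<lambda>x. f x * g x)" by (rule polydeg.pd_mult)
  moreover have "(k' - l) + l = k'" using pd_mult by auto
  ultimately show ?case by simp
qed (auto intro: polydeg.intros)

lemma polyfun_pd: "f \<in> polyfun I \<Longrightarrow> \<exists>k. polydeg I k f"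
proof (induct rule: polyfun.induct)
  case (pf_add f g)
  then obtain k l where "polydeg I k f" "polydeg I l g" by auto
  then have "polydeg I (max k l) f" "polydeg I (max k l) g" by (auto intro: pd_mono)
  then show ?case by (blast intro: pd_add)
qed (auto intro: polydeg.intros)

lemma pd_polyfun: "polydeg I k f \<Longrightarrow> f \<in> polyfun I"
  by (induct rule: polydeg.induct) (auto intro: polyfun.intros)

lemma pd_sum: "(\<forall>i<(m::nat). polydeg I k (fs i)) \<Longrightarrow> polydeg I k (\<lambda>x. \<Sum>i<m. a i * fs i x)"
proof (induct m)
  case 0 then show ?case by (simp add: pd_const)
next
  case (Suc m)
  have "polydeg I (0 + k) (\<lambda>x. a m * fs m x)" using Suc by (intro pd_mult pd_const) auto
  then have "polydeg I k (\<lambda>x. (\<Sum>i<m. a i * fs i x) + a m * fs m x)" using Suc by (intro pd_add) auto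
  then show ?case by simp
qed

lemma lspan_mono: "A \<subseteq> B \<Longrightarrow> lspan A \<subseteq> lspan B"
proof
  fix f assume "f \<in> lspan A" "A \<subseteq> B" then show "f \<in> lspan B"
    by (induct rule: lspan.induct) (auto intro: lspan.intros)
qed

lemma lspan_scale: "f \<in> lspan A \<Longrightarrow> (\<lambda>x. c * f x) \<in> lspan A"
proof (induct rule: lspan.induct)
  case ls_zero then show ?case by (simp add: lspan.ls_zero)
next
  case (ls_gen g c') then show ?case using lspan.ls_gen[of g A "c*c'"] by (simp add: mult.assoc)
next
  case (ls_add f g) then show ?case using lspan.ls_add[of "\<lambda>x. c * f x" A "\<lambda>x. c * g x"]
    by (simp add: distrib_left)
qed

lemma lspan_base: "g \<in> A \<Longrightarrow> g \<in> lspan A"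
  using lspan.ls_gen[of g A 1] by simp

lemma lspan_sum: "finite S \<Longrightarrow> (\<forall>s\<in>S. f s \<in> lspan A) \<Longrightarrow> (\<lambda>x. \<Sum>s\<in>S. f s x) \<in> lspan A"
  by (induct rule: finite_induct) (auto intro: lspan.intros)

lemma lspan_mult1: "f \<in> lspan A \<Longrightarrow> b \<in> B \<Longrightarrow> (\<forall>a\<in>A. \<forall>b\<in>B. (\<lambda>x. a x * b x) \<in> C) \<Longrightarrow>
   (\<lambda>x. f x * b x) \<in> lspan C"
proof (induct rule: lspan.induct)
  case ls_zero then show ?case by (simp add: lspan.ls_zero)
next
  case (ls_gen g c) then show ?case using lspan.ls_gen[of "\<lambda>x. g x * b x" C c] by (simp add: mult.assoc)
next
  case (ls_add f g) then show ?case using lspan.ls_add[of "\<lambda>x. f x * b x" C "\<lambda>x. g x * b x"]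
    by (simp add: distrib_right)
qed

lemma lspan_mult0: "g \<in> lspan B \<Longrightarrow> f \<in> lspan A \<Longrightarrow> (\<forall>a\<in>A. \<forall>b\<in>B. (\<lambda>x. a x * b x) \<in> C) \<Longrightarrow>
   (\<lambda>x. f x * g x) \<in> lspan C"
proof (induct rule: lspan.induct)
  case ls_zero then show ?case by (simp add: lspan.ls_zero)
next
  case (ls_gen g c) then show ?case using lspan_scale[OF lspan_mult1[of f A g B C], of c]
    by (simp add: algebra_simps)
next
  case (ls_add g h) then show ?case using lspan.ls_add[of "\<lambda>x. f x * g x" C "\<lambda>x. f x * h x"]
    by (simp add: distrib_left)
qed

lemma lspan_mult: "f \<in> lspan A \<Longrightarrow> g \<in> lspan B \<Longrightarrow> (\<forall>a\<in>A. \<forall>b\<in>B. (\<lambda>x. a x * b x) \<in> C) \<Longrightarrow>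
   (\<lambda>x. f x * g x) \<in> lspan C"
  using lspan_mult0 by blast



definition Vars :: "nat \<Rightarrow> nat \<Rightarrow> nat \<Rightarrow> nat set \<Rightarrow> (nat \<times> nat \<times> nat) set" where
  "Vars n d r W = {1..r} \<times> {1..n} \<times> ({1..d} - W)"

definition T2 :: "nat \<Rightarrow> nat \<Rightarrow> nat set \<Rightarrow> nat list set" where
  "T2 n d W = {t \<in> idx_set n d. \<exists>x\<in>set t. x \<in> W}"

definition gen :: "nat \<Rightarrow> nat \<Rightarrow> nat \<Rightarrow> nat set \<Rightarrow> (nat \<times> nat \<times> nat \<Rightarrow> nat) \<Rightarrow> (nat list \<Rightarrow> nat)
   \<Rightarrow> (nat \<Rightarrow> nat \<Rightarrow> nat \<Rightarrow> complex) \<Rightarrow> complex" where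
  "gen n d r W \<alpha> \<beta> = (\<lambda>\<mu>. (\<Prod>v\<in>Vars n d r W. (\<mu> (fst v) (fst (snd v)) (snd (snd v))) ^ \<alpha> v) *
       (\<Prod>t\<in>T2 n d W. sigma_map n d r \<mu> t ^ \<beta> t))"

definition Gset :: "nat \<Rightarrow> nat \<Rightarrow> nat \<Rightarrow> nat set \<Rightarrow> nat \<Rightarrow> nat \<Rightarrow> ((nat \<Rightarrow> nat \<Rightarrow> nat \<Rightarrow> complex) \<Rightarrow> complex) set" where
  "Gset n d r W a b = (\<lambda>(\<alpha>,\<beta>). gen n d r W \<alpha> \<beta>) ` ((Vars n d r W \<rightarrow>\<^sub>E {0..a}) \<times> (T2 n d W \<rightarrow>\<^sub>E {0..b}))"

lemma finite_idx: "finite (idx_set n d)"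
proof -
  have "idx_set n d \<subseteq> {xs. set xs \<subseteq> {0..d} \<and> length xs = n}"
    by (auto simp: idx_set_def member_le_sum_list)
  moreover have "finite {xs. set xs \<subseteq> {0..d} \<and> length xs = n}"
    by (rule finite_lists_length_eq) simp
  ultimately show ?thesis by (rule finite_subset)
qed

lemma finite_Vars: "finite (Vars n d r W)" by (simp add: Vars_def)
lemma finite_T2: "finite (T2 n d W)" using finite_idx by (simp add: T2_def)

lemma Gset_finite: "finite (Gset n d r W a b)"
  unfolding Gset_def using finite_Vars finite_T2 by (intro finite_imageI finite_cartesian_product finite_PiE) auto

lemma Gset_card: "card (Gset n d r W a b) \<le> (a+1) ^ card (Vars n d r W) * (b+1) ^ card (T2 n d W)"
proof -
  have "card (Gset n d r W a b) \<le> card ((Vars n d r W \<rightarrow>\<^sub>E {0..a}) \<times> (T2 n d W \<rightarrow>\<^sub>E {0..b}))"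
    unfolding Gset_def by (rule card_image_le) (use finite_Vars finite_T2 in \<open>intro finite_cartesian_product finite_PiE, auto\<close>)
  also have "\<dots> = (a+1) ^ card (Vars n d r W) * (b+1) ^ card (T2 n d W)"
    using finite_Vars finite_T2 by (simp add: card_cartesian_product card_PiE)
  finally show ?thesis .
qed

lemma Gset_mono: "a \<le> a' \<Longrightarrow> b \<le> b' \<Longrightarrow> Gset n d r W a b \<subseteq> Gset n d r W a' b'"
  unfolding Gset_def by (intro image_mono Sigma_mono PiE_mono) auto

lemma Gset_mult:
  assumes "g \<in> Gset n d r W a b" "h \<in> Gset n d r W a' b'"
  shows "(\<lambda>x. g x * h x) \<in> Gset n d r W (a+a') (b+b')"
proof -
  obtain \<alpha> \<beta> where g: "g = gen n d r W \<alpha> \<beta>" "\<alpha> \<in> Vars n d r W \<rightarrow>\<^sub>E {0..a}" "\<beta> \<in> T2 n d W \<rightarrow>\<^sub>E {0..b}"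
    using assms(1) unfolding Gset_def by auto
  obtain \<alpha>' \<beta>' where h: "h = gen n d r W \<alpha>' \<beta>'" "\<alpha>' \<in> Vars n d r W \<rightarrow>\<^sub>E {0..a'}" "\<beta>' \<in> T2 n d W \<rightarrow>\<^sub>E {0..b'}"
    using assms(2) unfolding Gset_def by auto
  define \<alpha>2 where "\<alpha>2 = restrict (\<lambda>v. \<alpha> v + \<alpha>' v) (Vars n d r W)"
  define \<beta>2 where "\<beta>2 = restrict (\<lambda>v. \<beta> v + \<beta>' v) (T2 n d W)"
  have in2: "\<alpha>2 \<in> Vars n d r W \<rightarrow>\<^sub>E {0..a+a'}" "\<beta>2 \<in> T2 n d W \<rightarrow>\<^sub>E {0..b+b'}"
    using g h by (auto simp: \<alpha>2_def \<beta>2_def PiE_iff intro: add_mono)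
  have "(\<lambda>x. g x * h x) = gen n d r W \<alpha>2 \<beta>2"
    unfolding g h gen_def \<alpha>2_def \<beta>2_def
    by (auto simp: fun_eq_iff power_add prod.distrib intro!: prod.cong)
  then show ?thesis using in2 unfolding Gset_def by force
qed

lemma one_in_Gset: "(\<lambda>x. 1) \<in> Gset n d r W a b"
proof -
  have "(\<lambda>x. 1) = gen n d r W (\<lambda>v\<in>Vars n d r W. 0) (\<lambda>v\<in>T2 n d W. 0)"
    unfolding gen_def by (auto simp: fun_eq_iff)
  then show ?thesis unfolding Gset_def by force
qed

lemma var_in_Gset: "(j,k,i) \<in> Vars n d r W \<Longrightarrow> (\<lambda>\<mu>. \<mu> j k i) \<in> Gset n d r W 1 0"
proof -
  assume v: "(j,k,i) \<in> Vars n d r W"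
  define \<alpha> where "\<alpha> = (\<lambda>u\<in>Vars n d r W. if u = (j,k,i) then 1 else (0::nat))"
  have "(\<lambda>\<mu>. \<mu> j k i) = gen n d r W \<alpha> (\<lambda>v\<in>T2 n d W. 0)"
  proof
    fix \<mu> :: "nat \<Rightarrow> nat \<Rightarrow> nat \<Rightarrow> complex"
    have "(\<Prod>u\<in>Vars n d r W. (\<mu> (fst u) (fst (snd u)) (snd (snd u))) ^ \<alpha> u)
        = (\<Prod>u\<in>Vars n d r W. if u = (j,k,i) then \<mu> (fst u) (fst (snd u)) (snd (snd u)) else 1)"
      by (rule prod.cong) (auto simp: \<alpha>_def)
    also have "\<dots> = \<mu> j k i" using v finite_Vars by (simp add: prod.delta)
    finally show "\<mu> j k i = gen n d r W \<alpha> (\<lambda>v\<in>T2 n d W. 0) \<mu>" unfolding gen_def by simp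
  qed
  moreover have "\<alpha> \<in> Vars n d r W \<rightarrow>\<^sub>E {0..1}" by (auto simp: \<alpha>_def)
  ultimately show ?thesis unfolding Gset_def by force
qed

lemma T2_in_Gset: "t \<in> T2 n d W \<Longrightarrow> (\<lambda>\<mu>. sigma_map n d r \<mu> t) \<in> Gset n d r W 0 1"
proof -
  assume v: "t \<in> T2 n d W"
  define \<beta> where "\<beta> = (\<lambda>u\<in>T2 n d W. if u = t then 1 else (0::nat))"
  have "(\<lambda>\<mu>. sigma_map n d r \<mu> t) = gen n d r W (\<lambda>v\<in>Vars n d r W. 0) \<beta>"
  proof
    fix \<mu> :: "nat \<Rightarrow> nat \<Rightarrow> nat \<Rightarrow> complex"
    have "(\<Prod>u\<in>T2 n d W. sigma_map n d r \<mu> u ^ \<beta> u)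
        = (\<Prod>u\<in>T2 n d W. if u = t then sigma_map n d r \<mu> u else 1)"
      by (rule prod.cong) (auto simp: \<beta>_def)
    also have "\<dots> = sigma_map n d r \<mu> t" using v finite_T2 by (simp add: prod.delta)
    finally show "sigma_map n d r \<mu> t = gen n d r W (\<lambda>v\<in>Vars n d r W. 0) \<beta> \<mu>" unfolding gen_def by simp
  qed
  moreover have "\<beta> \<in> T2 n d W \<rightarrow>\<^sub>E {0..1}" by (auto simp: \<beta>_def)
  ultimately show ?thesis unfolding Gset_def by force
qed

lemma lspan_prod:
  assumes "finite A" "\<forall>k\<in>A. f k \<in> lspan (Gset n d r W 1 0)"
  shows "(\<lambda>\<mu>. \<Prod>k\<in>A. f k \<mu>) \<in> lspan (Gset n d r W (card A) 0)"
  using assms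
proof (induct rule: finite_induct)
  case empty then show ?case using lspan_base[OF one_in_Gset] by simp
next
  case (insert k A)
  have "(\<lambda>\<mu>. f k \<mu> * (\<Prod>k\<in>A. f k \<mu>)) \<in> lspan (Gset n d r W (1 + card A) (0+0))"
    using insert by (intro lspan_mult[of _ "Gset n d r W 1 0" _ "Gset n d r W (card A) 0"])
      (use Gset_mult[of _ n d r W 1 0 _ "card A" 0] in auto)
  then show ?case using insert by simp
qed

lemma T1_in_span:
  assumes t: "t \<in> idx_set n d" "t \<notin> T2 n d W"
  shows "(\<lambda>\<mu>. sigma_map n d r \<mu> t) \<in> lspan (Gset n d r W n 0)"
proof -
  have fac: "(\<lambda>\<mu>. mu_val \<mu> j k (t ! (k - 1))) \<in> lspan (Gset n d r W 1 0)"
    if j: "j \<in> {1..r}" and k: "k \<in> {1..n}" for j k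
  proof (cases "t ! (k - 1) = 0")
    case True then show ?thesis using lspan_base[OF one_in_Gset] by (simp add: mu_val_def)
  next
    case False
    have mem: "t ! (k - 1) \<in> set t" using t k by (auto simp: idx_set_def)
    then have "t ! (k - 1) \<le> d" using t by (auto simp: idx_set_def member_le_sum_list)
    moreover have "t ! (k - 1) \<notin> W" using t mem by (auto simp: T2_def)
    ultimately have "(j, k, t ! (k - 1)) \<in> Vars n d r W" using j k False by (auto simp: Vars_def)
    then show ?thesis using lspan_base[OF var_in_Gset] False by (simp add: mu_val_def)
  qed
  have "(\<lambda>\<mu>. \<Sum>j\<in>{1..r}. \<Prod>k\<in>{1..n}. mu_val \<mu> j k (t ! (k - 1))) \<in> lspan (Gset n d r W n 0)"
    using lspan_prod[of "{1..n}" "\<lambda>k \<mu>. mu_val \<mu> _ k (t ! (k - 1))" n d r W] fac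
    by (intro lspan_sum) auto
  then show ?thesis using t(1) by (simp add: sigma_map_def)
qed

lemma compose_span:
  assumes "polydeg (idx_set n d) k f"
  shows "(\<lambda>\<mu>. f (sigma_map n d r \<mu>)) \<in> lspan (Gset n d r W (n*k) k)"
  using assms
proof (induct rule: polydeg.induct)
  case (pd_const k c)
  then show ?case using lspan.ls_gen[OF one_in_Gset, of c] by simp
next
  case (pd_var v k)
  show ?case
  proof (cases "v \<in> T2 n d W")
    case True
    then show ?thesis using lspan_mono[OF Gset_mono[of 0 "n*k" 1 k]] lspan_base[OF T2_in_Gset] pd_var by blast
  next
    case False
    have "n \<le> n * k" using pd_var by simp
    then show ?thesis using lspan_mono[OF Gset_mono[of n "n*k" 0 k]] T1_in_span[OF pd_var(1) False] by blast
  qed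
next
  case (pd_add k f g) then show ?case by (auto intro: lspan.ls_add)
next
  case (pd_mult k f l g)
  then show ?case using lspan_mult[OF pd_mult(2) pd_mult(4)] Gset_mult by (simp add: distrib_left)
qed



definition good :: "'a set \<Rightarrow> ('a \<Rightarrow> complex) set \<Rightarrow> nat \<Rightarrow> nat \<Rightarrow> bool" where
  "good I Z k m \<longleftrightarrow> (\<exists>fs. (\<forall>i<m. polydeg I k (fs i)) \<and>
     (\<forall>a. (\<forall>x\<in>Z. (\<Sum>i<m. a i * fs i x) = 0) \<longrightarrow> (\<forall>i<m. a i = 0)))"

lemma zclosed_zero: assumes "h \<in> polyfun I" shows "zclosed I {x \<in> aff_space I. h x = 0}"
proof -
  from assms have "{h} \<subseteq> polyfun I \<and> {x \<in> aff_space I. h x = 0} = {x \<in> aff_space I. \<forall>f\<in>{h}. f x = 0}" by auto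
  then show ?thesis unfolding zclosed_def by (intro exI[of _ "{h}"])
qed

lemma upper_good:
  assumes "good (idx_set n d) (sigma_cone n d r) k m"
  shows "m \<le> (n*k+1) ^ card (Vars n d r W) * (k+1) ^ card (T2 n d W)"
proof -
  obtain fs where fs: "\<forall>i<m. polydeg (idx_set n d) k (fs i)"
    "\<forall>a. (\<forall>x\<in>sigma_cone n d r. (\<Sum>i<m. a i * fs i x) = 0) \<longrightarrow> (\<forall>i<m. a i = 0)"
    using assms unfolding good_def by blast
  define gs where "gs = (\<lambda>i \<mu>. fs i (sigma_map n d r \<mu>))"
  have sp: "\<forall>i<m. gs i \<in> lspan (Gset n d r W (n*k) k)"
  proof (rule allI, rule impI)
    fix i assume "i < m"
    then have "polydeg (idx_set n d) k (fs i)" using fs(1) by simp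
    from compose_span[OF this, of r W] show "gs i \<in> lspan (Gset n d r W (n*k) k)" unfolding gs_def .
  qed
  have ind: "\<forall>a. (\<forall>x. (\<Sum>i<m. a i * gs i x) = 0) \<longrightarrow> (\<forall>i<m. a i = 0)"
  proof (rule allI, rule impI)
    fix a assume a: "\<forall>x. (\<Sum>i<m. a i * gs i x) = 0"
    define h where "h = (\<lambda>x. \<Sum>i<m. a i * fs i x)"
    have "h \<in> polyfun (idx_set n d)" unfolding h_def by (rule pd_polyfun[OF pd_sum]) (use fs in auto)
    then have cl: "zclosed (idx_set n d) {x \<in> aff_space (idx_set n d). h x = 0}" by (rule zclosed_zero)
    have "range (sigma_map n d r) \<subseteq> {x \<in> aff_space (idx_set n d). h x = 0}"
      using a by (auto simp: aff_space_def sigma_map_def h_def gs_def)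
    then have "{x \<in> aff_space (idx_set n d). h x = 0} \<in> {C. zclosed (idx_set n d) C \<and> range (sigma_map n d r) \<subseteq> C}"
      using cl by simp
    then have "sigma_cone n d r \<subseteq> {x \<in> aff_space (idx_set n d). h x = 0}"
      unfolding sigma_cone_def zclosure_def by (rule Inter_lower)
    then have "\<forall>x\<in>sigma_cone n d r. (\<Sum>i<m. a i * fs i x) = 0" by (auto simp: h_def)
    then show "\<forall>i<m. a i = 0" using fs(2) by blast
  qed
  have "m \<le> card (Gset n d r W (n*k) k)" by (rule indep_bound[OF Gset_finite sp ind])
  also have "\<dots> \<le> (n*k+1) ^ card (Vars n d r W) * (k+1) ^ card (T2 n d W)" by (rule Gset_card)
  finally show ?thesis .
qed

lemma good_base: assumes "Z \<noteq> {}" shows "good I Z 0 1"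
proof -
  from assms obtain z where "z \<in> Z" by blast
  have "(\<forall>i<(1::nat). polydeg I 0 ((\<lambda>_ _. 1::complex) i)) \<and>
     (\<forall>a::nat\<Rightarrow>complex. (\<forall>x\<in>Z. (\<Sum>i<(1::nat). a i * (\<lambda>_ _. 1::complex) i x) = 0) \<longrightarrow> (\<forall>i<(1::nat). a i = 0))"
    using \<open>z \<in> Z\<close> by (auto intro: pd_const simp: One_nat_def)
  then show ?thesis unfolding good_def by (intro exI[of _ "\<lambda>_ _. 1::complex"])
qed

lemma good_zero: "good I Z k 0"
  unfolding good_def by auto

lemma good_mono_set: "good I Z k m \<Longrightarrow> Z \<subseteq> V \<Longrightarrow> good I V k m"
  unfolding good_def by blast

lemma good_mono_deg: "good I Z k m \<Longrightarrow> k \<le> k' \<Longrightarrow> good I Z k' m"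
  unfolding good_def using pd_mono by blast

lemma sum_split_add: "(\<Sum>i<m+m'. f i) = (\<Sum>i<m. f i) + (\<Sum>j<m'. f (m+j::nat))"
  by (induct m') (auto simp: add.assoc)

lemma good_step:
  assumes Z: "Z \<subseteq> Z'" and irr: "zirreducible I Z'" and g: "polydeg I e g" "\<forall>x\<in>Z. g x = 0" "\<exists>x\<in>Z'. g x \<noteq> 0"
    and gZ: "good I Z k m" and gZ': "good I Z' k' m'"
  shows "good I Z' (max k (k'+e)) (m+m')"
proof -
  obtain fs where fs: "\<forall>i<m. polydeg I k (fs i)"
    "\<forall>a. (\<forall>x\<in>Z. (\<Sum>i<m. a i * fs i x) = 0) \<longrightarrow> (\<forall>i<m. a i = 0)"
    using gZ unfolding good_def by blast
  obtain hs where hs: "\<forall>i<m'. polydeg I k' (hs i)"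
    "\<forall>a. (\<forall>x\<in>Z'. (\<Sum>i<m'. a i * hs i x) = 0) \<longrightarrow> (\<forall>i<m'. a i = 0)"
    using gZ' unfolding good_def by blast
  define F where "F = (\<lambda>i. if i < m then fs i else (\<lambda>x. g x * hs (i - m) x))"
  have deg: "\<forall>i<m+m'. polydeg I (max k (k'+e)) (F i)"
  proof (intro allI impI)
    fix i assume i: "i < m + m'"
    show "polydeg I (max k (k'+e)) (F i)"
    proof (cases "i < m")
      case True then show ?thesis using fs(1) by (auto simp: F_def intro: pd_mono)
    next
      case False
      then have "polydeg I (e + k') (\<lambda>x. g x * hs (i - m) x)"
        using i hs(1) g(1) by (intro pd_mult) auto
      then show ?thesis using False by (auto simp: F_def intro: pd_mono)
    qed
  qed
  have ind: "\<forall>a. (\<forall>x\<in>Z'. (\<Sum>i<m+m'. a i * F i x) = 0) \<longrightarrow> (\<forall>i<m+m'. a i = 0)"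
  proof (rule allI, rule impI)
    fix a assume a: "\<forall>x\<in>Z'. (\<Sum>i<m+m'. a i * F i x) = 0"
    define H where "H = (\<lambda>x. \<Sum>j<m'. a (m+j) * hs j x)"
    have split: "(\<Sum>i<m+m'. a i * F i x) = (\<Sum>i<m. a i * fs i x) + g x * H x" for x
      unfolding sum_split_add H_def by (auto simp: F_def sum_distrib_left algebra_simps)
    have "\<forall>x\<in>Z. (\<Sum>i<m. a i * fs i x) = 0" using a Z g(2) split by fastforce
    then have a1: "\<forall>i<m. a i = 0" using fs(2) by blast
    have prodz: "\<forall>x\<in>Z'. g x * H x = 0" using a split a1 by simp
    have Hpf: "H \<in> polyfun I" unfolding H_def by (rule pd_polyfun[OF pd_sum]) (use hs in auto)
    have gpf: "g \<in> polyfun I" by (rule pd_polyfun[OF g(1)])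
    have Z'aff: "Z' \<subseteq> aff_space I" using irr unfolding zirreducible_def zclosed_def by blast
    have "Z' \<subseteq> {x \<in> aff_space I. g x = 0} \<union> {x \<in> aff_space I. H x = 0}" using prodz Z'aff by auto
    then have "Z' \<subseteq> {x \<in> aff_space I. g x = 0} \<or> Z' \<subseteq> {x \<in> aff_space I. H x = 0}"
      using irr zclosed_zero[OF gpf] zclosed_zero[OF Hpf] unfolding zirreducible_def by blast
    then have "Z' \<subseteq> {x \<in> aff_space I. H x = 0}" using g(3) by auto
    then have "\<forall>j<m'. a (m+j) = 0" using hs(2) unfolding H_def by auto
    then show "\<forall>i<m+m'. a i = 0" using a1
      by (metis add_diff_inverse_nat nat_add_left_cancel_less)
  qed
  show ?thesis unfolding good_def using deg ind by blast
qed

lemma good_iter: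
  assumes Z: "Z \<subseteq> Z'" and irr: "zirreducible I Z'" and g: "polydeg I e g" "\<forall>x\<in>Z. g x = 0" "\<exists>x\<in>Z'. g x \<noteq> 0"
    and gZ: "good I Z k m"
  shows "good I Z' (k + s*e) (s*m)"
proof (induct s)
  case 0 then show ?case by (simp add: good_zero)
next
  case (Suc s)
  have "good I Z' (max k (k + s*e + e)) (m + s*m)" by (rule good_step[OF Z irr g gZ Suc])
  then show ?case by (simp add: algebra_simps)
qed

lemma sep:
  assumes "zclosed I Z" "Z \<subset> Z'" "zclosed I Z'"
  shows "\<exists>g e. polydeg I e g \<and> (\<forall>x\<in>Z. g x = 0) \<and> (\<exists>x\<in>Z'. g x \<noteq> 0)"
proof -
  obtain F where F: "F \<subseteq> polyfun I" "Z = {x \<in> aff_space I. \<forall>f\<in>F. f x = 0}"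
    using assms(1) unfolding zclosed_def by blast
  have "Z' \<subseteq> aff_space I" using assms(3) unfolding zclosed_def by blast
  then obtain x where x: "x \<in> Z'" "x \<notin> Z" "x \<in> aff_space I" using assms(2) by blast
  then obtain f where f: "f \<in> F" "f x \<noteq> 0" using F(2) by blast
  then obtain e where "polydeg I e f" using F(1) polyfun_pd by blast
  then show ?thesis using f x F(2) by blast
qed

lemma chain_good:
  assumes ch: "\<forall>i\<le>L. zirreducible I (Z i) \<and> Z i \<subseteq> V" "\<forall>i<L. Z i \<subset> Z (Suc i)"
  shows "\<exists>K. \<forall>t. good I V (K*t) (t^L)"
proof -
  have "j \<le> L \<Longrightarrow> \<exists>K. \<forall>t. good I (Z j) (K*t) (t^j)" for j
  proof (induct j)
    case 0
    have "Z 0 \<noteq> {}" using ch(1) unfolding zirreducible_def by auto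
    then show ?case using good_base[of "Z 0" I] by (intro exI[of _ 0]) simp
  next
    case (Suc j)
    then obtain K where K: "\<forall>t. good I (Z j) (K*t) (t^j)" by auto
    have irr: "zirreducible I (Z j)" "zirreducible I (Z (Suc j))" using ch(1) Suc(2) by auto
    have sub: "Z j \<subset> Z (Suc j)" using ch(2) Suc(2) by auto
    have cl: "zclosed I (Z j)" "zclosed I (Z (Suc j))" using irr unfolding zirreducible_def by auto
    obtain g e where g: "polydeg I e g" "\<forall>x\<in>Z j. g x = 0" "\<exists>x\<in>Z (Suc j). g x \<noteq> 0"
      using sep[OF cl(1) sub cl(2)] by blast
    have sub': "Z j \<subseteq> Z (Suc j)" using sub by auto
    have "good I (Z (Suc j)) (K*t + t*e) (t * t^j)" for t
      using good_iter[OF sub' irr(2) g K[rule_format, of t], of t] by (simp add: mult.commute)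
    then show ?case by (intro exI[of _ "K+e"]) (simp add: algebra_simps)
  qed
  then obtain K where "\<forall>t. good I (Z L) (K*t) (t^L)" by blast
  then show ?thesis using ch(1) good_mono_set by blast
qed



lemma sum_list_filter_nonzero: "sum_list (filter (\<lambda>x. x \<noteq> 0) (t::nat list)) = sum_list t"
  by (induct t) auto

lemma finite_partitions: "finite (partitions_le n d)"
proof -
  have "partitions_le n d \<subseteq> mset ` {xs. set xs \<subseteq> {0..d} \<and> length xs \<le> n}"
  proof
    fix lam assume lam: "lam \<in> partitions_le n d"
    define xs where "xs = sorted_list_of_multiset lam"
    have m: "mset xs = lam" by (simp add: xs_def)
    have "length xs \<le> n" using lam m by (auto simp: partitions_le_def dest: arg_cong[of _ _ size])
    moreover have "set xs \<subseteq> {0..d}"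
    proof
      fix x assume "x \<in> set xs"
      then have "x \<le> sum_list xs" by (simp add: member_le_sum_list)
      also have "sum_list xs = d" using lam m by (auto simp: partitions_le_def sum_mset_sum_list[symmetric])
      finally show "x \<in> {0..d}" by simp
    qed
    ultimately show "lam \<in> mset ` {xs. set xs \<subseteq> {0..d} \<and> length xs \<le> n}" using m by blast
  qed
  moreover have "finite {xs. set xs \<subseteq> {0..d} \<and> length xs \<le> n}"
    by (rule finite_lists_length_le) simp
  ultimately show ?thesis using finite_subset by blast
qed

lemma sumN:
  assumes S: "S \<subseteq> {1..d}"
  shows "(\<Sum>lam \<in> {lam \<in> partitions_le n d. \<exists>p \<in># lam. p \<in> S}. int (card (N_lam n d lam)))
       = int (card (T2 n d S))"
proof -
  let ?A = "{lam \<in> partitions_le n d. \<exists>p \<in># lam. p \<in> S}"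
  have fA: "finite ?A" using finite_partitions by simp
  have fN: "\<forall>lam\<in>?A. finite (N_lam n d lam)" using finite_idx by (auto simp: N_lam_def)
  have disj: "\<forall>l1\<in>?A. \<forall>l2\<in>?A. l1 \<noteq> l2 \<longrightarrow> N_lam n d l1 \<inter> N_lam n d l2 = {}"
    by (auto simp: N_lam_def)
  have "(\<Sum>lam \<in> ?A. int (card (N_lam n d lam))) = int (\<Sum>lam \<in> ?A. card (N_lam n d lam))" by simp
  also have "(\<Sum>lam \<in> ?A. card (N_lam n d lam)) = card (\<Union>lam\<in>?A. N_lam n d lam)"
    by (rule card_UN_disjoint[symmetric]) (use fA fN disj in auto)
  also have "(\<Union>lam\<in>?A. N_lam n d lam) = T2 n d S"
  proof
    show "(\<Union>lam\<in>?A. N_lam n d lam) \<subseteq> T2 n d S"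
      by (auto simp: N_lam_def T2_def)
  next
    show "T2 n d S \<subseteq> (\<Union>lam\<in>?A. N_lam n d lam)"
    proof
      fix t assume t: "t \<in> T2 n d S"
      define lam where "lam = mset (filter (\<lambda>x. x \<noteq> 0) t)"
      have ti: "t \<in> idx_set n d" "\<exists>x\<in>set t. x \<in> S" using t by (auto simp: T2_def)
      have "sum_mset lam = sum_list (filter (\<lambda>x. x \<noteq> 0) t)" by (simp only: lam_def sum_mset_sum_list)
      then have "sum_mset lam = d" using ti sum_list_filter_nonzero[of t] by (simp add: idx_set_def)
      moreover have "size lam \<le> n"
      proof -
        have "size lam = length (filter (\<lambda>x. x \<noteq> 0) t)" by (simp only: lam_def size_mset)
        also have "\<dots> \<le> length t" by (rule length_filter_le)
        finally show ?thesis using ti by (simp add: idx_set_def)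
      qed
      moreover have "\<forall>p\<in>#lam. p > 0" by (auto simp: lam_def)
      moreover have "\<exists>p\<in>#lam. p \<in> S"
      proof -
        obtain x where x: "x \<in> set t" "x \<in> S" using ti by blast
        then have "x \<noteq> 0" using S by auto
        then show ?thesis using x by (auto simp: lam_def)
      qed
      ultimately have "lam \<in> ?A" by (simp add: partitions_le_def)
      moreover have "t \<in> N_lam n d lam" using ti by (simp add: N_lam_def lam_def)
      ultimately show "t \<in> (\<Union>lam\<in>?A. N_lam n d lam)" by blast
    qed
  qed
  finally show ?thesis .
qed

lemma T2_union: "T2 n d (A \<union> B) = T2 n d A \<union> T2 n d B" by (auto simp: T2_def)
lemma T2_inter: "T2 n d (A \<inter> B) \<subseteq> T2 n d A \<inter> T2 n d B" by (auto simp: T2_def)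
lemma T2_empty: "T2 n d {} = {}" by (auto simp: T2_def)

lemma submod: "card (T2 n d (A \<union> B)) + card (T2 n d (A \<inter> B)) \<le> card (T2 n d A) + card (T2 n d B)"
proof -
  have "card (T2 n d A) + card (T2 n d B) = card (T2 n d A \<union> T2 n d B) + card (T2 n d A \<inter> T2 n d B)"
    by (rule card_Un_Int) (auto simp: finite_T2)
  moreover have "card (T2 n d (A \<inter> B)) \<le> card (T2 n d A \<inter> T2 n d B)"
    using finite_T2[of n d A] by (intro card_mono) (auto simp: T2_def)
  ultimately show ?thesis by (simp add: T2_union)
qed

lemma feasible_T2:
  assumes "ilp_feasible n d r c" "S \<subseteq> {1..d}"
  shows "(\<Sum>i\<in>S. c i) \<le> int (card (T2 n d S))"
  using assms sumN[OF assms(2), of n] unfolding ilp_feasible_def by auto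

lemma feasible_iff:
  "ilp_feasible n d r c \<longleftrightarrow> (\<forall>i. i \<notin> {1..d} \<longrightarrow> c i = 0) \<and>
     (\<forall>i\<in>{1..d}. 0 \<le> c i \<and> c i \<le> int (n * r)) \<and>
     (\<forall>S \<subseteq> {1..d}. (\<Sum>i\<in>S. c i) \<le> int (card (T2 n d S)))"
  unfolding ilp_feasible_def using sumN by (auto simp del: of_nat_sum)

definition tight :: "nat \<Rightarrow> nat \<Rightarrow> (nat \<Rightarrow> int) \<Rightarrow> nat set \<Rightarrow> bool" where
  "tight n d c S \<longleftrightarrow> S \<subseteq> {1..d} \<and> (\<Sum>i\<in>S. c i) = int (card (T2 n d S))"

lemma tight_union:
  assumes f: "ilp_feasible n d r c" and A: "tight n d c A" and B: "tight n d c B"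
  shows "tight n d c (A \<union> B)"
proof -
  have sub: "A \<subseteq> {1..d}" "B \<subseteq> {1..d}" using A B by (auto simp: tight_def)
  have fin: "finite A" "finite B" using sub finite_subset by auto
  have "(\<Sum>i\<in>A \<union> B. c i) + (\<Sum>i\<in>A \<inter> B. c i) = (\<Sum>i\<in>A. c i) + (\<Sum>i\<in>B. c i)"
    by (rule sum.union_inter[OF fin])
  also have "\<dots> = int (card (T2 n d A)) + int (card (T2 n d B))" using A B by (simp add: tight_def)
  finally have eq: "(\<Sum>i\<in>A \<union> B. c i) + (\<Sum>i\<in>A \<inter> B. c i) = int (card (T2 n d A)) + int (card (T2 n d B))" .
  have "(\<Sum>i\<in>A \<inter> B. c i) \<le> int (card (T2 n d (A \<inter> B)))" using feasible_T2[OF f, of "A \<inter> B"] sub by auto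
  moreover have "(\<Sum>i\<in>A \<union> B. c i) \<le> int (card (T2 n d (A \<union> B)))" using feasible_T2[OF f, of "A \<union> B"] sub by auto
  moreover have "int (card (T2 n d (A \<union> B))) + int (card (T2 n d (A \<inter> B))) \<le> int (card (T2 n d A)) + int (card (T2 n d B))"
    using submod[of n d A B] by linarith
  ultimately have "(\<Sum>i\<in>A \<union> B. c i) = int (card (T2 n d (A \<union> B)))" using eq by linarith
  then show ?thesis using sub by (simp add: tight_def)
qed

lemma tight_UN:
  assumes f: "ilp_feasible n d r c" and J: "finite J" and T: "\<forall>j\<in>J. tight n d c (S j)"
  shows "tight n d c (\<Union>j\<in>J. S j)"
  using J T
proof (induct rule: finite_induct)
  case empty then show ?case by (simp add: tight_def T2_empty)
next
  case (insert j J) then show ?case using tight_union[OF f] by simp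
qed

lemma opt_witness:
  assumes n: "n \<ge> 1"
  shows "\<exists>W \<subseteq> {1..d}. int (n * r * card ({1..d} - W)) + int (card (T2 n d W)) - 1 \<le> ilp_opt n d r"
proof -
  let ?F = "{(\<Sum>i=1..d. c i) - 1 | c. ilp_feasible n d r c}"
  have fin: "finite {c. ilp_feasible n d r c}"
  proof (rule finite_subset)
    show "{c. ilp_feasible n d r c} \<subseteq> {c. \<forall>x. (x \<in> {1..d} \<longrightarrow> c x \<in> {0..int (n*r)}) \<and> (x \<notin> {1..d} \<longrightarrow> c x = 0)}"
      by (auto simp: ilp_feasible_def)
    show "finite {c. \<forall>x. (x \<in> {1..d} \<longrightarrow> c x \<in> {0..int (n*r)}) \<and> (x \<notin> {1..d} \<longrightarrow> c x = (0::int))}"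
      by (rule finite_set_of_finite_funs) auto
  qed
  have finF: "finite ?F" using fin by (simp add: setcompr_eq_image)
  have "ilp_feasible n d r (\<lambda>_. 0)" by (simp add: feasible_iff)
  then have neF: "?F \<noteq> {}" by blast
  obtain c where c: "ilp_feasible n d r c" "(\<Sum>i=1..d. c i) - 1 = ilp_opt n d r"
    using Max_in[OF finF neF] unfolding ilp_opt_def by auto
  have maxc: "(\<Sum>i=1..d. c' i) - 1 \<le> ilp_opt n d r" if "ilp_feasible n d r c'" for c'
    unfolding ilp_opt_def using that by (intro Max_ge[OF finF]) blast
  have ex_tight: "\<exists>S. tight n d c S \<and> i \<in> S" if i: "i \<in> {1..d}" "c i < int (n*r)" for i
  proof (rule ccontr)
    assume nt: "\<not> (\<exists>S. tight n d c S \<and> i \<in> S)"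
    define c' where "c' = c(i := c i + 1)"
    have "ilp_feasible n d r c'"
      unfolding feasible_iff
    proof (intro conjI allI ballI impI)
      fix x assume "x \<notin> {1..d}" then show "c' x = 0" using c(1) i by (auto simp: c'_def feasible_iff)
    next
      fix x assume "x \<in> {1..d}" then show "0 \<le> c' x" "c' x \<le> int (n*r)"
        using c(1) i by (auto simp: c'_def feasible_iff)
    next
      fix S assume S: "S \<subseteq> {1..d}"
      show "(\<Sum>j\<in>S. c' j) \<le> int (card (T2 n d S))"
      proof (cases "i \<in> S")
        case False
        then have "(\<Sum>j\<in>S. c' j) = (\<Sum>j\<in>S. c j)" by (intro sum.cong) (auto simp: c'_def)
        then show ?thesis using feasible_T2[OF c(1) S] by simp
      next
        case True
        have fS: "finite S" using S finite_subset by auto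
        have "(\<Sum>j\<in>S. c' j) = (\<Sum>j\<in>S. c j) + 1"
        proof -
          have "(\<Sum>j\<in>S. c' j) = c' i + (\<Sum>j\<in>S - {i}. c' j)" using True fS by (simp add: sum.remove)
          also have "(\<Sum>j\<in>S - {i}. c' j) = (\<Sum>j\<in>S - {i}. c j)" by (rule sum.cong) (auto simp: c'_def)
          also have "c' i = c i + 1" by (simp add: c'_def)
          also have "c i + 1 + (\<Sum>j\<in>S - {i}. c j) = (\<Sum>j\<in>S. c j) + 1" using True fS by (simp add: sum.remove)
          finally show ?thesis .
        qed
        moreover have "(\<Sum>j\<in>S. c j) \<noteq> int (card (T2 n d S))" using nt True S by (auto simp: tight_def)
        ultimately show ?thesis using feasible_T2[OF c(1) S] by simp
      qed
    qed
    then have "(\<Sum>j=1..d. c' j) - 1 \<le> ilp_opt n d r" by (rule maxc)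
    moreover have "(\<Sum>j=1..d. c' j) = (\<Sum>j=1..d. c j) + 1"
    proof -
      have "(\<Sum>j=1..d. c' j) = c' i + (\<Sum>j\<in>{1..d} - {i}. c' j)" using i(1) by (simp add: sum.remove)
      also have "(\<Sum>j\<in>{1..d} - {i}. c' j) = (\<Sum>j\<in>{1..d} - {i}. c j)" by (rule sum.cong) (auto simp: c'_def)
      also have "c' i = c i + 1" by (simp add: c'_def)
      also have "c i + 1 + (\<Sum>j\<in>{1..d} - {i}. c j) = (\<Sum>j=1..d. c j) + 1" using i(1) by (simp add: sum.remove)
      finally show ?thesis .
    qed
    ultimately show False using c(2) by simp
  qed
  define J where "J = {i \<in> {1..d}. c i < int (n*r)}"
  define S where "S = (\<lambda>i. SOME S. tight n d c S \<and> i \<in> S)"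
  have Sj: "tight n d c (S j) \<and> j \<in> S j" if "j \<in> J" for j
  proof -
    have "\<exists>S. tight n d c S \<and> j \<in> S" using ex_tight[of j] that unfolding J_def by auto
    from someI_ex[OF this] show ?thesis unfolding S_def .
  qed
  define W where "W = (\<Union>j\<in>J. S j)"
  have tW: "tight n d c W" unfolding W_def by (rule tight_UN[OF c(1)]) (auto simp: J_def Sj)
  then have Wsub: "W \<subseteq> {1..d}" by (simp add: tight_def)
  have rest: "c i = int (n*r)" if "i \<in> {1..d} - W" for i
  proof -
    have "i \<notin> J" using that Sj unfolding W_def by blast
    moreover have "i \<in> {1..d}" using that by auto
    moreover then have "c i \<le> int (n*r)" using c(1) unfolding feasible_iff by blast
    ultimately show ?thesis by (auto simp: J_def)
  qed
  have "(\<Sum>i=1..d. c i) = (\<Sum>i\<in>W. c i) + (\<Sum>i\<in>{1..d} - W. c i)"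
    using Wsub by (metis add.commute finite_atLeastAtMost sum.subset_diff)
  also have "(\<Sum>i\<in>{1..d} - W. c i) = (\<Sum>i\<in>{1..d} - W. int (n*r))" using rest by (rule sum.cong[OF refl])
  also have "\<dots> = int (n * r * card ({1..d} - W))" by simp
  also have "(\<Sum>i\<in>W. c i) = int (card (T2 n d W))" using tW by (simp add: tight_def)
  finally show ?thesis using Wsub c(2) by (intro exI[of _ W]) auto
qed



lemma growth_bound:
  fixes k a b K n :: nat
  assumes h: "\<forall>t. t^k \<le> (n*(K*t)+1)^a * (K*t+1)^b"
  shows "k \<le> a + b"
proof (rule ccontr)
  assume "\<not> k \<le> a + b"
  then have kD: "a + b + 1 \<le> k" by simp
  define A where "A = n*K + K + 1"
  define D where "D = a + b"
  define t where "t = A^D + 1"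
  have t1: "1 \<le> t" by (simp add: t_def)
  have "n*(K*t)+1 \<le> A*t" using t1 by (simp add: A_def algebra_simps)
  moreover have "K*t+1 \<le> A*t" using t1 by (simp add: A_def algebra_simps)
  ultimately have "(n*(K*t)+1)^a * (K*t+1)^b \<le> (A*t)^a * (A*t)^b"
    by (intro mult_le_mono power_mono) auto
  also have "\<dots> = A^D * t^D" by (simp add: D_def power_add power_mult_distrib)
  finally have le1: "t^k \<le> A^D * t^D" using h by (meson order.trans)
  have "t^(D+1) \<le> t^k" using kD t1 by (intro power_increasing) (auto simp: D_def)
  moreover have "A^D * t^D < t * t^D" using t1 by (simp add: t_def)
  ultimately show False using le1 by (simp add: mult.commute)
qed

lemma zdim_bound:
  assumes "\<forall>L Z. (\<forall>i\<le>L. zirreducible I (Z i) \<and> Z i \<subseteq> V) \<and> (\<forall>i<L. Z i \<subset> Z (Suc i)) \<longrightarrow> L \<le> D"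
  shows "the_enat (zdim I V) \<le> D"
proof -
  have "zdim I V \<le> enat D"
    unfolding zdim_def
  proof (rule Sup_least)
    fix x assume "x \<in> {enat k |k. \<exists>Z. (\<forall>i\<le>k. zirreducible I (Z i) \<and> Z i \<subseteq> V) \<and> (\<forall>i<k. Z i \<subset> Z (Suc i))}"
    then obtain k Z where "x = enat k" "(\<forall>i\<le>k. zirreducible I (Z i) \<and> Z i \<subseteq> V) \<and> (\<forall>i<k. Z i \<subset> Z (Suc i))"
      by blast
    then show "x \<le> enat D" using assms by auto
  qed
  then obtain m where "zdim I V = enat m" "m \<le> D" by (cases "zdim I V") auto
  then show ?thesis by simp
qed

theorem theorem5p3:
  fixes n d r :: nat
  assumes "n \<ge> 1" and "d \<ge> 1" and "r \<ge> 1"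
  shows "sigma_dim n d r \<le> ilp_opt n d r"
proof -
  obtain W where W: "W \<subseteq> {1..d}"
    "int (n * r * card ({1..d} - W)) + int (card (T2 n d W)) - 1 \<le> ilp_opt n d r"
    using opt_witness[OF assms(1)] by blast
  define a where "a = card (Vars n d r W)"
  define b where "b = card (T2 n d W)"
  have a: "a = n * r * card ({1..d} - W)"
    by (simp add: a_def Vars_def card_cartesian_product)
  have "\<forall>L Z. (\<forall>i\<le>L. zirreducible (idx_set n d) (Z i) \<and> Z i \<subseteq> sigma_cone n d r) \<and>
      (\<forall>i<L. Z i \<subset> Z (Suc i)) \<longrightarrow> L \<le> a + b"
  proof (intro allI impI)
    fix L Z assume ch: "(\<forall>i\<le>L. zirreducible (idx_set n d) (Z i) \<and> Z i \<subseteq> sigma_cone n d r) \<and>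
      (\<forall>i<(L::nat). Z i \<subset> Z (Suc i))"
    obtain K where K: "\<forall>t. good (idx_set n d) (sigma_cone n d r) (K*t) (t^L)"
      using chain_good[of L "idx_set n d" Z "sigma_cone n d r"] ch by blast
    have "\<forall>t. t^L \<le> (n*(K*t)+1)^a * (K*t+1)^b"
      using upper_good[of n d r _ _ W] K unfolding a_def b_def by blast
    then show "L \<le> a + b" by (rule growth_bound)
  qed
  then have "the_enat (zdim (idx_set n d) (sigma_cone n d r)) \<le> a + b" by (rule zdim_bound)
  then have "sigma_dim n d r \<le> int a + int b - 1" unfolding sigma_dim_def by simp
  then show ?thesis using W(2) a b_def by simp
qed

end
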